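(* For every partial trace $T$ of iTML, the set $\mathrm{Prefix}(T) = \{T' \mid T' \sqsubseteq T\}$, ordered by $\sqsubseteq$, is a complete lattice.
   Context: Partial expressions $e$ of iTML are built from $x \mid () \mid \mathsf{inl}\,e \mid \mathsf{inr}\,e \mid (e_1,e_2) \mid \mathsf{fst}\,e \mid \mathsf{snd}\,e \mid \mathsf{fun}\,f(x).M \mid \Box$ (with $M$ partial computations, $\Box$ a hole), ordered by the least order $\sqsubseteq$ with $\Box\sqsubseteq t$ that is closed under constructors componentwise. Outcomes $k ::= \mathsf{val} \mid \mathsf{exn}$; $\ell$ ranges over store locations and $\mathcal{L}$ over finite sets of locations. Partial traces: $T ::= \mathsf{return}\,e \mid \mathsf{let_F}(T) \mid \mathsf{let_S}(T_1, x.T_2) \mid \mathsf{app}(e_1,e_2,f.x.T) \mid \mathsf{caseL}(e,x.T,y) \mid \mathsf{caseR}(e,x,y.T) \mid \mathsf{raise}\,e \mid \mathsf{try_S}(T) \mid \mathsf{try_F}(T_1,x.T_2) \mid \mathsf{ref}_\ell\,e \mid e_1 :=_\ell e_2 \mid !_\ell\,e \mid \Box^{k}_{\mathcal{L}}$. The set $\mathsf{writes}(T)$: $\mathsf{writes}(\Box^k_{\mathcal{L}})=\mathcal{L}$; $\emptyset$ for $\mathsf{return}\,e$, $\mathsf{raise}\,e$ and $!_\ell\,e$; $\{\ell\}$ for $\mathsf{ref}_\ell\,e$ and $e_1:=_\ell e_2$; $\mathsf{writes}(T_1)\cup\mathsf{writes}(T_2)$ for $\mathsf{let_S}(T_1,x.T_2)$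 and $\mathsf{try_F}(T_1,x.T_2)$; $\mathsf{writes}(T)$ for $\mathsf{let_F}(T)$, $\mathsf{try_S}(T)$, $\mathsf{app}(e_1,e_2,f.x.T)$, $\mathsf{caseL}(e,x.T,y)$, $\mathsf{caseR}(e,x,y.T)$. The outcome $\mathsf{outcome}(T)$: $k$ for $\Box^k_{\mathcal{L}}$; $\mathsf{val}$ for $\mathsf{return}\,e$, $\mathsf{try_S}(T)$, $\mathsf{ref}_\ell\,e$, $e_1:=_\ell e_2$, $!_\ell\,e$; $\mathsf{exn}$ for $\mathsf{let_F}(T)$ and $\mathsf{raise}\,e$; $\mathsf{outcome}(T_2)$ for $\mathsf{let_S}(T_1,x.T_2)$ and $\mathsf{try_F}(T_1,x.T_2)$; $\mathsf{outcome}(T)$ for $\mathsf{app}(\ldots,T)$, $\mathsf{caseL}(e,x.T,y)$, $\mathsf{caseR}(e,x,y.T)$. The order $\sqsubseteq$ on traces is the least relation containing $\Box^{k}_{\mathcal{L}} \sqsubseteq T$ whenever $\mathsf{writes}(T)=\mathcal{L}$ and $\mathsf{outcome}(T)=k$, and closed under each trace constructor componentwise (with expression components compared by $\sqsubseteq$ on expressions and the labels $\ell$, $x,y,f$ identical), e.g. $\mathsf{let_S}(T_1,x.T_2)\sqsubseteq\mathsf{let_S}(T_1',x.T_2')$ iff $T_i\sqsubseteq T_i'$, and $e_1 :=_\ell e_2 \sqsubseteq e_1' :=_\ell e_2'$ iff $e_i\sqsubseteq e_i'$. There is no universal least trace. *)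

theory Defs
  imports "HOL-Algebra.Complete_Lattice" "HOL-Library.FSet"
begin

type_synonym var = string
type_synonym loc = nat

datatype outcome = Val | Exn

datatype expr =
    EVar var
  | EUnit
  | EInl expr
  | EInr expr
  | EPair expr expr
  | EFst expr
  | ESnd expr
  | EFun var var comp          (* fun f(x). M *)
  | EHole
and comp =
    CReturn expr
  | CLet var comp comp
  | CApp expr expr
  | CCase expr var comp var comp
  | CRaise expr
  | CTry comp var comp
  | CRef expr
  | CAssign expr expr
  | CDeref expr
  | CHole

inductive expr_le :: "expr \<Rightarrow> expr \<Rightarrow> bool"
  and comp_le :: "comp \<Rightarrow> comp \<Rightarrow> bool" where
  "expr_le EHole e"
| "expr_le (EVar x) (EVar x)"
| "expr_le EUnit EUnit"
| "expr_le e e' \<Longrightarrow> expr_le (EInl e) (EInl e')"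
| "expr_le e e' \<Longrightarrow> expr_le (EInr e) (EInr e')"
| "expr_le e1 e1' \<Longrightarrow> expr_le e2 e2' \<Longrightarrow> expr_le (EPair e1 e2) (EPair e1' e2')"
| "expr_le e e' \<Longrightarrow> expr_le (EFst e) (EFst e')"
| "expr_le e e' \<Longrightarrow> expr_le (ESnd e) (ESnd e')"
| "comp_le M M' \<Longrightarrow> expr_le (EFun f x M) (EFun f x M')"
| "comp_le CHole M"
| "expr_le e e' \<Longrightarrow> comp_le (CReturn e) (CReturn e')"
| "comp_le M1 M1' \<Longrightarrow> comp_le M2 M2' \<Longrightarrow> comp_le (CLet x M1 M2) (CLet x M1' M2')"
| "expr_le e1 e1' \<Longrightarrow> expr_le e2 e2' \<Longrightarrow> comp_le (CApp e1 e2) (CApp e1' e2')"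
| "expr_le e e' \<Longrightarrow> comp_le M1 M1' \<Longrightarrow> comp_le M2 M2' \<Longrightarrow>
     comp_le (CCase e x M1 y M2) (CCase e' x M1' y M2')"
| "expr_le e e' \<Longrightarrow> comp_le (CRaise e) (CRaise e')"
| "comp_le M1 M1' \<Longrightarrow> comp_le M2 M2' \<Longrightarrow> comp_le (CTry M1 x M2) (CTry M1' x M2')"
| "expr_le e e' \<Longrightarrow> comp_le (CRef e) (CRef e')"
| "expr_le e1 e1' \<Longrightarrow> expr_le e2 e2' \<Longrightarrow> comp_le (CAssign e1 e2) (CAssign e1' e2')"
| "expr_le e e' \<Longrightarrow> comp_le (CDeref e) (CDeref e')"

datatype trace =
    TReturn expr
  | TLetF trace
  | TLetS trace var trace
  | TApp expr expr var var trace          (* app(e1, e2, f.x.T) *)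
  | TCaseL expr var trace var             (* caseL(e, x.T, y) *)
  | TCaseR expr var var trace             (* caseR(e, x, y.T) *)
  | TRaise expr
  | TTryS trace
  | TTryF trace var trace
  | TRef loc expr
  | TAssign expr loc expr
  | TDeref loc expr
  | THole outcome "loc fset"

fun writes :: "trace \<Rightarrow> loc fset" where
  "writes (THole k L) = L"
| "writes (TReturn e) = {||}"
| "writes (TRaise e) = {||}"
| "writes (TDeref l e) = {||}"
| "writes (TRef l e) = {|l|}"
| "writes (TAssign e1 l e2) = {|l|}"
| "writes (TLetS T1 x T2) = writes T1 |\<union>| writes T2"
| "writes (TTryF T1 x T2) = writes T1 |\<union>| writes T2"
| "writes (TLetF T) = writes T"
| "writes (TTryS T) = writes T"
| "writes (TApp e1 e2 f x T) = writes T"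
| "writes (TCaseL e x T y) = writes T"
| "writes (TCaseR e x y T) = writes T"

fun outcome_of :: "trace \<Rightarrow> outcome" where
  "outcome_of (THole k L) = k"
| "outcome_of (TReturn e) = Val"
| "outcome_of (TTryS T) = Val"
| "outcome_of (TRef l e) = Val"
| "outcome_of (TAssign e1 l e2) = Val"
| "outcome_of (TDeref l e) = Val"
| "outcome_of (TLetF T) = Exn"
| "outcome_of (TRaise e) = Exn"
| "outcome_of (TLetS T1 x T2) = outcome_of T2"
| "outcome_of (TTryF T1 x T2) = outcome_of T2"
| "outcome_of (TApp e1 e2 f x T) = outcome_of T"
| "outcome_of (TCaseL e x T y) = outcome_of T"
| "outcome_of (TCaseR e x y T) = outcome_of T"

inductive trace_le :: "trace \<Rightarrow> trace \<Rightarrow> bool" where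
  hole: "writes T = L \<Longrightarrow> outcome_of T = k \<Longrightarrow> trace_le (THole k L) T"
| "expr_le e e' \<Longrightarrow> trace_le (TReturn e) (TReturn e')"
| "trace_le T T' \<Longrightarrow> trace_le (TLetF T) (TLetF T')"
| "trace_le T1 T1' \<Longrightarrow> trace_le T2 T2' \<Longrightarrow> trace_le (TLetS T1 x T2) (TLetS T1' x T2')"
| "expr_le e1 e1' \<Longrightarrow> expr_le e2 e2' \<Longrightarrow> trace_le T T' \<Longrightarrow>
     trace_le (TApp e1 e2 f x T) (TApp e1' e2' f x T')"
| "expr_le e e' \<Longrightarrow> trace_le T T' \<Longrightarrow> trace_le (TCaseL e x T y) (TCaseL e' x T' y)"
| "expr_le e e' \<Longrightarrow> trace_le T T' \<Longrightarrow> trace_le (TCaseR e x y T) (TCaseR e' x y T')"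
| "expr_le e e' \<Longrightarrow> trace_le (TRaise e) (TRaise e')"
| "trace_le T T' \<Longrightarrow> trace_le (TTryS T) (TTryS T')"
| "trace_le T1 T1' \<Longrightarrow> trace_le T2 T2' \<Longrightarrow> trace_le (TTryF T1 x T2) (TTryF T1' x T2')"
| "expr_le e e' \<Longrightarrow> trace_le (TRef l e) (TRef l e')"
| "expr_le e1 e1' \<Longrightarrow> expr_le e2 e2' \<Longrightarrow> trace_le (TAssign e1 l e2) (TAssign e1' l e2')"
| "expr_le e e' \<Longrightarrow> trace_le (TDeref l e) (TDeref l e')"

definition Prefix :: "trace \<Rightarrow> trace set" where
  "Prefix T = {T'. trace_le T' T}"

definition prefix_order :: "trace \<Rightarrow> trace gorder" where
  "prefix_order T = \<lparr>carrier = Prefix T, eq = (=), le = trace_le\<rparr>"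

end

theory Submission
  imports Defs
begin


inductive_simps el_r[simp]:
  "expr_le x EHole" "expr_le x (EVar v)" "expr_le x EUnit" "expr_le x (EInl e)" "expr_le x (EInr e)"
  "expr_le x (EPair e1 e2)" "expr_le x (EFst e)" "expr_le x (ESnd e)" "expr_le x (EFun f v M)"
inductive_simps cl_r[simp]:
  "comp_le x CHole" "comp_le x (CReturn e)" "comp_le x (CLet v M1 M2)" "comp_le x (CApp e1 e2)"
  "comp_le x (CCase e v M1 w M2)" "comp_le x (CRaise e)" "comp_le x (CTry M1 v M2)"
  "comp_le x (CRef e)" "comp_le x (CAssign e1 e2)" "comp_le x (CDeref e)"

inductive_simps el_l:
  "expr_le (EVar v) x" "expr_le EUnit x" "expr_le (EInl e) x" "expr_le (EInr e) x"
  "expr_le (EPair e1 e2) x" "expr_le (EFst e) x" "expr_le (ESnd e) x" "expr_le (EFun f v M) x"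
inductive_simps cl_l:
  "comp_le (CReturn e) x" "comp_le (CLet v M1 M2) x" "comp_le (CApp e1 e2) x"
  "comp_le (CCase e v M1 w M2) x" "comp_le (CRaise e) x" "comp_le (CTry M1 v M2) x"
  "comp_le (CRef e) x" "comp_le (CAssign e1 e2) x" "comp_le (CDeref e) x"

lemma refl_ec: "expr_le e e" "comp_le M M"
  by (induct e and M) auto

lemma trans_ec: "expr_le a b \<Longrightarrow> expr_le b c \<Longrightarrow> expr_le a c"
   "comp_le A B \<Longrightarrow> comp_le B C \<Longrightarrow> comp_le A C"
proof (induct a b and A B arbitrary: c and C rule: expr_le_comp_le.inducts)
qed (auto simp: el_l cl_l intro: expr_le_comp_le.intros)

lemma antisym_ec: "expr_le a b \<Longrightarrow> expr_le b a \<Longrightarrow> a = b"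
   "comp_le A B \<Longrightarrow> comp_le B A \<Longrightarrow> A = B"
proof (induct a b and A B rule: expr_le_comp_le.inducts)
qed auto

inductive_simps tl_r[simp]:
  "trace_le x (TReturn e)" "trace_le x (TLetF T)" "trace_le x (TLetS T1 v T2)"
  "trace_le x (TApp e1 e2 f v T)" "trace_le x (TCaseL e v T w)" "trace_le x (TCaseR e v w T)"
  "trace_le x (TRaise e)" "trace_le x (TTryS T)" "trace_le x (TTryF T1 v T2)"
  "trace_le x (TRef l e)" "trace_le x (TAssign e1 l e2)" "trace_le x (TDeref l e)" "trace_le x (THole k L)"
inductive_simps tl_l:
  "trace_le (TReturn e) x" "trace_le (TLetF T) x" "trace_le (TLetS T1 v T2) x"
  "trace_le (TApp e1 e2 f v T) x" "trace_le (TCaseL e v T w) x" "trace_le (TCaseR e v w T) x"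
  "trace_le (TRaise e) x" "trace_le (TTryS T) x" "trace_le (TTryF T1 v T2) x"
  "trace_le (TRef l e) x" "trace_le (TAssign e1 l e2) x" "trace_le (TDeref l e) x" "trace_le (THole k L) x"

lemma pres: "trace_le a b \<Longrightarrow> writes a = writes b \<and> outcome_of a = outcome_of b"
  by (induct rule: trace_le.induct) auto

lemma refl_t: "trace_le T T"
  by (induct T) (auto simp: refl_ec)

lemma trans_t: "trace_le a b \<Longrightarrow> trace_le b c \<Longrightarrow> trace_le a c"
proof (induct a b arbitrary: c rule: trace_le.induct)
  case (hole T L k)
  then show ?case using pres[OF hole(3)] by (auto intro: trace_le.hole)
qed (auto simp: tl_l intro: trans_ec)

lemma antisym_t: "trace_le a b \<Longrightarrow> trace_le b a \<Longrightarrow> a = b"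
proof (induct a b rule: trace_le.induct)
qed (auto simp: antisym_ec tl_l)

primrec ge :: "expr \<Rightarrow> expr set \<Rightarrow> expr" and gc :: "comp \<Rightarrow> comp set \<Rightarrow> comp" where
  "ge EHole S = EHole"
| "ge (EVar v) S = (if EHole \<in> S then EHole else EVar v)"
| "ge EUnit S = (if EHole \<in> S then EHole else EUnit)"
| "ge (EInl e) S = (if EHole \<in> S then EHole else EInl (ge e {a. EInl a \<in> S}))"
| "ge (EInr e) S = (if EHole \<in> S then EHole else EInr (ge e {a. EInr a \<in> S}))"
| "ge (EPair e1 e2) S = (if EHole \<in> S then EHole else
     EPair (ge e1 {a. \<exists>b. EPair a b \<in> S}) (ge e2 {b. \<exists>a. EPair a b \<in> S}))"
| "ge (EFst e) S = (if EHole \<in> S then EHole else EFst (ge e {a. EFst a \<in> S}))"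
| "ge (ESnd e) S = (if EHole \<in> S then EHole else ESnd (ge e {a. ESnd a \<in> S}))"
| "ge (EFun f v M) S = (if EHole \<in> S then EHole else EFun f v (gc M {a. EFun f v a \<in> S}))"
| "gc CHole S = CHole"
| "gc (CReturn e) S = (if CHole \<in> S then CHole else CReturn (ge e {a. CReturn a \<in> S}))"
| "gc (CLet v M1 M2) S = (if CHole \<in> S then CHole else
     CLet v (gc M1 {a. \<exists>b. CLet v a b \<in> S}) (gc M2 {b. \<exists>a. CLet v a b \<in> S}))"
| "gc (CApp e1 e2) S = (if CHole \<in> S then CHole else
     CApp (ge e1 {a. \<exists>b. CApp a b \<in> S}) (ge e2 {b. \<exists>a. CApp a b \<in> S}))"
| "gc (CCase e v M1 w M2) S = (if CHole \<in> S then CHole else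
     CCase (ge e {a. \<exists>b c. CCase a v b w c \<in> S}) v (gc M1 {b. \<exists>a c. CCase a v b w c \<in> S})
       w (gc M2 {c. \<exists>a b. CCase a v b w c \<in> S}))"
| "gc (CRaise e) S = (if CHole \<in> S then CHole else CRaise (ge e {a. CRaise a \<in> S}))"
| "gc (CTry M1 v M2) S = (if CHole \<in> S then CHole else
     CTry (gc M1 {a. \<exists>b. CTry a v b \<in> S}) v (gc M2 {b. \<exists>a. CTry a v b \<in> S}))"
| "gc (CRef e) S = (if CHole \<in> S then CHole else CRef (ge e {a. CRef a \<in> S}))"
| "gc (CAssign e1 e2) S = (if CHole \<in> S then CHole else
     CAssign (ge e1 {a. \<exists>b. CAssign a b \<in> S}) (ge e2 {b. \<exists>a. CAssign a b \<in> S}))"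
| "gc (CDeref e) S = (if CHole \<in> S then CHole else CDeref (ge e {a. CDeref a \<in> S}))"

inductive_simps ei:
  "expr_le (EInl a) (EInl b)" "expr_le (EInr a) (EInr b)" "expr_le (EPair a b) (EPair c d)"
  "expr_le (EFst a) (EFst b)" "expr_le (ESnd a) (ESnd b)" "expr_le (EFun f v M) (EFun f' v' M')"
  "comp_le (CReturn a) (CReturn b)" "comp_le (CLet v a b) (CLet v' c d)" "comp_le (CApp a b) (CApp c d)"
  "comp_le (CCase e v M1 w M2) (CCase e' v' M1' w' M2')" "comp_le (CRaise a) (CRaise b)"
  "comp_le (CTry a v b) (CTry c v' d)" "comp_le (CRef a) (CRef b)" "comp_le (CAssign a b) (CAssign c d)"
  "comp_le (CDeref a) (CDeref b)"

lemma ge_greatest: "expr_le y e \<Longrightarrow> \<forall>s\<in>S. expr_le y s \<Longrightarrow> expr_le y (ge e S)"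
   "comp_le Y M \<Longrightarrow> \<forall>s\<in>Q. comp_le Y s \<Longrightarrow> comp_le Y (gc M Q)"
proof (induct e and M arbitrary: S y and Q Y)
  case (EInl x)
  show ?case
  proof (cases "EHole \<in> S")
    case False
    then show ?thesis using EInl(2-3) EInl(1)[of _ "{a. EInl a \<in> S}"]
      by (auto simp: ei) fastforce+
  qed (use EInl in auto)
next
  case (EInr x)
  show ?case
  proof (cases "EHole \<in> S")
    case False
    then show ?thesis using EInr(2-3) EInr(1)[of _ "{a. EInr a \<in> S}"]
      by (auto simp: ei) fastforce+
  qed (use EInr in auto)
next
  case (EPair x1 x2)
  show ?case
  proof (cases "EHole \<in> S")
    case False
    then show ?thesis using EPair(3-4) EPair(1)[of _ "{a. \<exists>b. EPair a b \<in> S}"] EPair(2)[of _ "{b. \<exists>a. EPair a b \<in> S}"]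
      by (auto simp: ei) fastforce+
  qed (use EPair in auto)
next
  case (EFst x)
  show ?case
  proof (cases "EHole \<in> S")
    case False
    then show ?thesis using EFst(2-3) EFst(1)[of _ "{a. EFst a \<in> S}"]
      by (auto simp: ei) fastforce+
  qed (use EFst in auto)
next
  case (ESnd x)
  show ?case
  proof (cases "EHole \<in> S")
    case False
    then show ?thesis using ESnd(2-3) ESnd(1)[of _ "{a. ESnd a \<in> S}"]
      by (auto simp: ei) fastforce+
  qed (use ESnd in auto)
next
  case (EFun f v x)
  show ?case
  proof (cases "EHole \<in> S")
    case False
    then show ?thesis using EFun(2-3) EFun(1)[of _ "{a. EFun f v a \<in> S}"]
      by (auto simp: ei) fastforce+
  qed (use EFun in auto)
next
  case (CReturn x)
  show ?case
  proof (cases "CHole \<in> Q")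
    case False
    then show ?thesis using CReturn(2-3) CReturn(1)[of _ "{a. CReturn a \<in> Q}"]
      by (auto simp: ei) fastforce+
  qed (use CReturn in auto)
next
  case (CLet v x1 x2)
  show ?case
  proof (cases "CHole \<in> Q")
    case False
    then show ?thesis using CLet(3-4) CLet(1)[of _ "{a. \<exists>b. CLet v a b \<in> Q}"] CLet(2)[of _ "{b. \<exists>a. CLet v a b \<in> Q}"]
      by (auto simp: ei) fastforce+
  qed (use CLet in auto)
next
  case (CApp x1 x2)
  show ?case
  proof (cases "CHole \<in> Q")
    case False
    then show ?thesis using CApp(3-4) CApp(1)[of _ "{a. \<exists>b. CApp a b \<in> Q}"] CApp(2)[of _ "{b. \<exists>a. CApp a b \<in> Q}"]
      by (auto simp: ei) fastforce+
  qed (use CApp in auto)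
next
  case (CCase x1 v x2 w x3)
  show ?case
  proof (cases "CHole \<in> Q")
    case False
    then show ?thesis using CCase(4-5) CCase(1)[of _ "{a. \<exists>b c. CCase a v b w c \<in> Q}"] CCase(2)[of _ "{b. \<exists>a c. CCase a v b w c \<in> Q}"] CCase(3)[of _ "{c. \<exists>a b. CCase a v b w c \<in> Q}"]
      by (auto simp: ei) fastforce+
  qed (use CCase in auto)
next
  case (CRaise x)
  show ?case
  proof (cases "CHole \<in> Q")
    case False
    then show ?thesis using CRaise(2-3) CRaise(1)[of _ "{a. CRaise a \<in> Q}"]
      by (auto simp: ei) fastforce+
  qed (use CRaise in auto)
next
  case (CTry x1 v x2)
  show ?case
  proof (cases "CHole \<in> Q")
    case False
    then show ?thesis using CTry(3-4) CTry(1)[of _ "{a. \<exists>b. CTry a v b \<in> Q}"] CTry(2)[of _ "{b. \<exists>a. CTry a v b \<in> Q}"]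
      by (auto simp: ei) fastforce+
  qed (use CTry in auto)
next
  case (CRef x)
  show ?case
  proof (cases "CHole \<in> Q")
    case False
    then show ?thesis using CRef(2-3) CRef(1)[of _ "{a. CRef a \<in> Q}"]
      by (auto simp: ei) fastforce+
  qed (use CRef in auto)
next
  case (CAssign x1 x2)
  show ?case
  proof (cases "CHole \<in> Q")
    case False
    then show ?thesis using CAssign(3-4) CAssign(1)[of _ "{a. \<exists>b. CAssign a b \<in> Q}"] CAssign(2)[of _ "{b. \<exists>a. CAssign a b \<in> Q}"]
      by (auto simp: ei) fastforce+
  qed (use CAssign in auto)
next
  case (CDeref x)
  show ?case
  proof (cases "CHole \<in> Q")
    case False
    then show ?thesis using CDeref(2-3) CDeref(1)[of _ "{a. CDeref a \<in> Q}"]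
      by (auto simp: ei) fastforce+
  qed (use CDeref in auto)

qed (auto simp: ei)


lemma ge_le: "expr_le (ge e S) e" "comp_le (gc M Q) M"
  by (induct e and M arbitrary: S and Q) (auto simp: refl_ec)

lemma ge_lower: "\<forall>t\<in>S. expr_le t e \<Longrightarrow> s \<in> S \<Longrightarrow> expr_le (ge e S) s"
   "\<forall>t\<in>Q. comp_le t M \<Longrightarrow> s' \<in> Q \<Longrightarrow> comp_le (gc M Q) s'"
proof (induct e and M arbitrary: S s and Q s')
  case (EInl x)
  show ?case
  proof (cases "EHole \<in> S")
    case False
    have b1: "\<forall>t\<in>{a. EInl a \<in> S}. expr_le t x" using EInl(2) False by fastforce
    have sh: "expr_le s (EInl x)" using EInl(2-3) by blast
    from sh show ?thesis using EInl(3) False by (cases s) (auto simp: ei intro!: EInl(1)[OF b1])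
  qed (use EInl in auto)
next
  case (EInr x)
  show ?case
  proof (cases "EHole \<in> S")
    case False
    have b1: "\<forall>t\<in>{a. EInr a \<in> S}. expr_le t x" using EInr(2) False by fastforce
    have sh: "expr_le s (EInr x)" using EInr(2-3) by blast
    from sh show ?thesis using EInr(3) False by (cases s) (auto simp: ei intro!: EInr(1)[OF b1])
  qed (use EInr in auto)
next
  case (EPair x1 x2)
  show ?case
  proof (cases "EHole \<in> S")
    case False
    have b1: "\<forall>t\<in>{a. \<exists>b. EPair a b \<in> S}. expr_le t x1" using EPair(3) False by fastforce
    have b2: "\<forall>t\<in>{b. \<exists>a. EPair a b \<in> S}. expr_le t x2" using EPair(3) False by fastforce
    have sh: "expr_le s (EPair x1 x2)" using EPair(3-4) by blast
    from sh show ?thesis using EPair(4) False by (cases s) (auto simp: ei intro!: EPair(1)[OF b1] EPair(2)[OF b2])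
  qed (use EPair in auto)
next
  case (EFst x)
  show ?case
  proof (cases "EHole \<in> S")
    case False
    have b1: "\<forall>t\<in>{a. EFst a \<in> S}. expr_le t x" using EFst(2) False by fastforce
    have sh: "expr_le s (EFst x)" using EFst(2-3) by blast
    from sh show ?thesis using EFst(3) False by (cases s) (auto simp: ei intro!: EFst(1)[OF b1])
  qed (use EFst in auto)
next
  case (ESnd x)
  show ?case
  proof (cases "EHole \<in> S")
    case False
    have b1: "\<forall>t\<in>{a. ESnd a \<in> S}. expr_le t x" using ESnd(2) False by fastforce
    have sh: "expr_le s (ESnd x)" using ESnd(2-3) by blast
    from sh show ?thesis using ESnd(3) False by (cases s) (auto simp: ei intro!: ESnd(1)[OF b1])
  qed (use ESnd in auto)
next
  case (EFun f v x)
  show ?case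
  proof (cases "EHole \<in> S")
    case False
    have b1: "\<forall>t\<in>{a. EFun f v a \<in> S}. comp_le t x" using EFun(2) False by fastforce
    have sh: "expr_le s (EFun f v x)" using EFun(2-3) by blast
    from sh show ?thesis using EFun(3) False by (cases s) (auto simp: ei intro!: EFun(1)[OF b1])
  qed (use EFun in auto)
next
  case (CReturn x)
  show ?case
  proof (cases "CHole \<in> Q")
    case False
    have b1: "\<forall>t\<in>{a. CReturn a \<in> Q}. expr_le t x" using CReturn(2) False by fastforce
    have sh: "comp_le s' (CReturn x)" using CReturn(2-3) by blast
    from sh show ?thesis using CReturn(3) False by (cases s') (auto simp: ei intro!: CReturn(1)[OF b1])
  qed (use CReturn in auto)
next
  case (CLet v x1 x2)
  show ?case
  proof (cases "CHole \<in> Q")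
    case False
    have b1: "\<forall>t\<in>{a. \<exists>b. CLet v a b \<in> Q}. comp_le t x1" using CLet(3) False by fastforce
    have b2: "\<forall>t\<in>{b. \<exists>a. CLet v a b \<in> Q}. comp_le t x2" using CLet(3) False by fastforce
    have sh: "comp_le s' (CLet v x1 x2)" using CLet(3-4) by blast
    from sh show ?thesis using CLet(4) False by (cases s') (auto simp: ei intro!: CLet(1)[OF b1] CLet(2)[OF b2])
  qed (use CLet in auto)
next
  case (CApp x1 x2)
  show ?case
  proof (cases "CHole \<in> Q")
    case False
    have b1: "\<forall>t\<in>{a. \<exists>b. CApp a b \<in> Q}. expr_le t x1" using CApp(3) False by fastforce
    have b2: "\<forall>t\<in>{b. \<exists>a. CApp a b \<in> Q}. expr_le t x2" using CApp(3) False by fastforce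
    have sh: "comp_le s' (CApp x1 x2)" using CApp(3-4) by blast
    from sh show ?thesis using CApp(4) False by (cases s') (auto simp: ei intro!: CApp(1)[OF b1] CApp(2)[OF b2])
  qed (use CApp in auto)
next
  case (CCase x1 v x2 w x3)
  show ?case
  proof (cases "CHole \<in> Q")
    case False
    have b1: "\<forall>t\<in>{a. \<exists>b c. CCase a v b w c \<in> Q}. expr_le t x1" using CCase(4) False by fastforce
    have b2: "\<forall>t\<in>{b. \<exists>a c. CCase a v b w c \<in> Q}. comp_le t x2" using CCase(4) False by fastforce
    have b3: "\<forall>t\<in>{c. \<exists>a b. CCase a v b w c \<in> Q}. comp_le t x3" using CCase(4) False by fastforce
    have sh: "comp_le s' (CCase x1 v x2 w x3)" using CCase(4-5) by blast
    from sh show ?thesis using CCase(5) False by (cases s') (auto simp: ei intro!: CCase(1)[OF b1] CCase(2)[OF b2] CCase(3)[OF b3])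
  qed (use CCase in auto)
next
  case (CRaise x)
  show ?case
  proof (cases "CHole \<in> Q")
    case False
    have b1: "\<forall>t\<in>{a. CRaise a \<in> Q}. expr_le t x" using CRaise(2) False by fastforce
    have sh: "comp_le s' (CRaise x)" using CRaise(2-3) by blast
    from sh show ?thesis using CRaise(3) False by (cases s') (auto simp: ei intro!: CRaise(1)[OF b1])
  qed (use CRaise in auto)
next
  case (CTry x1 v x2)
  show ?case
  proof (cases "CHole \<in> Q")
    case False
    have b1: "\<forall>t\<in>{a. \<exists>b. CTry a v b \<in> Q}. comp_le t x1" using CTry(3) False by fastforce
    have b2: "\<forall>t\<in>{b. \<exists>a. CTry a v b \<in> Q}. comp_le t x2" using CTry(3) False by fastforce
    have sh: "comp_le s' (CTry x1 v x2)" using CTry(3-4) by blast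
    from sh show ?thesis using CTry(4) False by (cases s') (auto simp: ei intro!: CTry(1)[OF b1] CTry(2)[OF b2])
  qed (use CTry in auto)
next
  case (CRef x)
  show ?case
  proof (cases "CHole \<in> Q")
    case False
    have b1: "\<forall>t\<in>{a. CRef a \<in> Q}. expr_le t x" using CRef(2) False by fastforce
    have sh: "comp_le s' (CRef x)" using CRef(2-3) by blast
    from sh show ?thesis using CRef(3) False by (cases s') (auto simp: ei intro!: CRef(1)[OF b1])
  qed (use CRef in auto)
next
  case (CAssign x1 x2)
  show ?case
  proof (cases "CHole \<in> Q")
    case False
    have b1: "\<forall>t\<in>{a. \<exists>b. CAssign a b \<in> Q}. expr_le t x1" using CAssign(3) False by fastforce
    have b2: "\<forall>t\<in>{b. \<exists>a. CAssign a b \<in> Q}. expr_le t x2" using CAssign(3) False by fastforce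
    have sh: "comp_le s' (CAssign x1 x2)" using CAssign(3-4) by blast
    from sh show ?thesis using CAssign(4) False by (cases s') (auto simp: ei intro!: CAssign(1)[OF b1] CAssign(2)[OF b2])
  qed (use CAssign in auto)
next
  case (CDeref x)
  show ?case
  proof (cases "CHole \<in> Q")
    case False
    have b1: "\<forall>t\<in>{a. CDeref a \<in> Q}. expr_le t x" using CDeref(2) False by fastforce
    have sh: "comp_le s' (CDeref x)" using CDeref(2-3) by blast
    from sh show ?thesis using CDeref(3) False by (cases s') (auto simp: ei intro!: CDeref(1)[OF b1])
  qed (use CDeref in auto)
qed (auto simp: ei)

fun is_hole :: "trace \<Rightarrow> bool" where
  "is_hole (THole k L) = True"
| "is_hole _ = False"

inductive_simps ti:
  "trace_le (TReturn a) (TReturn b)" "trace_le (TLetF a) (TLetF b)" "trace_le (TLetS a v b) (TLetS c v' d)"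
  "trace_le (TApp a b f v c) (TApp a' b' f' v' c')" "trace_le (TCaseL a v b w) (TCaseL a' v' b' w')"
  "trace_le (TCaseR a v w b) (TCaseR a' v' w' b')" "trace_le (TRaise a) (TRaise b)"
  "trace_le (TTryS a) (TTryS b)" "trace_le (TTryF a v b) (TTryF c v' d)" "trace_le (TRef l a) (TRef l' b)"
  "trace_le (TAssign a l b) (TAssign c l' d)" "trace_le (TDeref l a) (TDeref l' b)"

primrec gt :: "trace \<Rightarrow> trace set \<Rightarrow> trace" where
  "gt (THole k L) S = THole k L"
| "gt (TReturn e) S = (if \<exists>s\<in>S. is_hole s then THole (outcome_of (TReturn e)) (writes (TReturn e)) else TReturn (ge e {a. TReturn a \<in> S}))"
| "gt (TLetF x) S = (if \<exists>s\<in>S. is_hole s then THole (outcome_of (TLetF x)) (writes (TLetF x)) else TLetF (gt x {a. TLetF a \<in> S}))"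
| "gt (TLetS x1 v x2) S = (if \<exists>s\<in>S. is_hole s then THole (outcome_of (TLetS x1 v x2)) (writes (TLetS x1 v x2)) else TLetS (gt x1 {a. \<exists>b. TLetS a v b \<in> S}) v (gt x2 {b. \<exists>a. TLetS a v b \<in> S}))"
| "gt (TApp e1 e2 f v x) S = (if \<exists>s\<in>S. is_hole s then THole (outcome_of (TApp e1 e2 f v x)) (writes (TApp e1 e2 f v x)) else TApp (ge e1 {a. \<exists>b c. TApp a b f v c \<in> S}) (ge e2 {b. \<exists>a c. TApp a b f v c \<in> S}) f v (gt x {c. \<exists>a b. TApp a b f v c \<in> S}))"
| "gt (TCaseL e v x w) S = (if \<exists>s\<in>S. is_hole s then THole (outcome_of (TCaseL e v x w)) (writes (TCaseL e v x w)) else TCaseL (ge e {a. \<exists>b. TCaseL a v b w \<in> S}) v (gt x {b. \<exists>a. TCaseL a v b w \<in> S}) w)"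
| "gt (TCaseR e v w x) S = (if \<exists>s\<in>S. is_hole s then THole (outcome_of (TCaseR e v w x)) (writes (TCaseR e v w x)) else TCaseR (ge e {a. \<exists>b. TCaseR a v w b \<in> S}) v w (gt x {b. \<exists>a. TCaseR a v w b \<in> S}))"
| "gt (TRaise e) S = (if \<exists>s\<in>S. is_hole s then THole (outcome_of (TRaise e)) (writes (TRaise e)) else TRaise (ge e {a. TRaise a \<in> S}))"
| "gt (TTryS x) S = (if \<exists>s\<in>S. is_hole s then THole (outcome_of (TTryS x)) (writes (TTryS x)) else TTryS (gt x {a. TTryS a \<in> S}))"
| "gt (TTryF x1 v x2) S = (if \<exists>s\<in>S. is_hole s then THole (outcome_of (TTryF x1 v x2)) (writes (TTryF x1 v x2)) else TTryF (gt x1 {a. \<exists>b. TTryF a v b \<in> S}) v (gt x2 {b. \<exists>a. TTryF a v b \<in> S}))"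
| "gt (TRef l e) S = (if \<exists>s\<in>S. is_hole s then THole (outcome_of (TRef l e)) (writes (TRef l e)) else TRef l (ge e {a. TRef l a \<in> S}))"
| "gt (TAssign e1 l e2) S = (if \<exists>s\<in>S. is_hole s then THole (outcome_of (TAssign e1 l e2)) (writes (TAssign e1 l e2)) else TAssign (ge e1 {a. \<exists>b. TAssign a l b \<in> S}) l (ge e2 {b. \<exists>a. TAssign a l b \<in> S}))"
| "gt (TDeref l e) S = (if \<exists>s\<in>S. is_hole s then THole (outcome_of (TDeref l e)) (writes (TDeref l e)) else TDeref l (ge e {a. TDeref l a \<in> S}))"

lemma gt_le: "trace_le (gt T S) T"
  by (induct T arbitrary: S) (auto simp: ge_le refl_t intro: trace_le.hole)

lemma gt_wo[simp]: "writes (gt T S) = writes T" "outcome_of (gt T S) = outcome_of T"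
  using pres[OF gt_le] by auto

lemma gt_greatest: "trace_le y T \<Longrightarrow> \<forall>s\<in>S. trace_le y s \<Longrightarrow> trace_le y (gt T S)"
proof (induct T arbitrary: S y)
  case (TReturn e)
  show ?case
  proof (cases "\<exists>s\<in>S. is_hole s")
    case True
    then obtain s where "s \<in> S" "is_hole s" by blast
    then show ?thesis using TReturn(1-2) by (cases s) (auto simp: tl_l)
  next
    case False
    then show ?thesis using TReturn(1-2) ge_greatest(1)[of _ _ "{a. TReturn a \<in> S}"]
      by (auto simp: ti) fastforce+
  qed
next
  case (TLetF x)
  show ?case
  proof (cases "\<exists>s\<in>S. is_hole s")
    case True
    then obtain s where "s \<in> S" "is_hole s" by blast
    then show ?thesis using TLetF(2-3) by (cases s) (auto simp: tl_l)
  next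
    case False
    then show ?thesis using TLetF(2-3) TLetF(1)[of _ "{a. TLetF a \<in> S}"]
      by (auto simp: ti) fastforce+
  qed
next
  case (TLetS x1 v x2)
  show ?case
  proof (cases "\<exists>s\<in>S. is_hole s")
    case True
    then obtain s where "s \<in> S" "is_hole s" by blast
    then show ?thesis using TLetS(3-4) by (cases s) (auto simp: tl_l)
  next
    case False
    then show ?thesis using TLetS(3-4) TLetS(1)[of _ "{a. \<exists>b. TLetS a v b \<in> S}"] TLetS(2)[of _ "{b. \<exists>a. TLetS a v b \<in> S}"]
      by (auto simp: ti) fastforce+
  qed
next
  case (TApp e1 e2 f v x)
  show ?case
  proof (cases "\<exists>s\<in>S. is_hole s")
    case True
    then obtain s where "s \<in> S" "is_hole s" by blast
    then show ?thesis using TApp(2-3) by (cases s) (auto simp: tl_l)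
  next
    case False
    then show ?thesis using TApp(2-3) ge_greatest(1)[of _ _ "{a. \<exists>b c. TApp a b f v c \<in> S}"] ge_greatest(1)[of _ _ "{b. \<exists>a c. TApp a b f v c \<in> S}"] TApp(1)[of _ "{c. \<exists>a b. TApp a b f v c \<in> S}"]
      by (auto simp: ti) fastforce+
  qed
next
  case (TCaseL e v x w)
  show ?case
  proof (cases "\<exists>s\<in>S. is_hole s")
    case True
    then obtain s where "s \<in> S" "is_hole s" by blast
    then show ?thesis using TCaseL(2-3) by (cases s) (auto simp: tl_l)
  next
    case False
    then show ?thesis using TCaseL(2-3) ge_greatest(1)[of _ _ "{a. \<exists>b. TCaseL a v b w \<in> S}"] TCaseL(1)[of _ "{b. \<exists>a. TCaseL a v b w \<in> S}"]
      by (auto simp: ti) fastforce+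
  qed
next
  case (TCaseR e v w x)
  show ?case
  proof (cases "\<exists>s\<in>S. is_hole s")
    case True
    then obtain s where "s \<in> S" "is_hole s" by blast
    then show ?thesis using TCaseR(2-3) by (cases s) (auto simp: tl_l)
  next
    case False
    then show ?thesis using TCaseR(2-3) ge_greatest(1)[of _ _ "{a. \<exists>b. TCaseR a v w b \<in> S}"] TCaseR(1)[of _ "{b. \<exists>a. TCaseR a v w b \<in> S}"]
      by (auto simp: ti) fastforce+
  qed
next
  case (TRaise e)
  show ?case
  proof (cases "\<exists>s\<in>S. is_hole s")
    case True
    then obtain s where "s \<in> S" "is_hole s" by blast
    then show ?thesis using TRaise(1-2) by (cases s) (auto simp: tl_l)
  next
    case False
    then show ?thesis using TRaise(1-2) ge_greatest(1)[of _ _ "{a. TRaise a \<in> S}"]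
      by (auto simp: ti) fastforce+
  qed
next
  case (TTryS x)
  show ?case
  proof (cases "\<exists>s\<in>S. is_hole s")
    case True
    then obtain s where "s \<in> S" "is_hole s" by blast
    then show ?thesis using TTryS(2-3) by (cases s) (auto simp: tl_l)
  next
    case False
    then show ?thesis using TTryS(2-3) TTryS(1)[of _ "{a. TTryS a \<in> S}"]
      by (auto simp: ti) fastforce+
  qed
next
  case (TTryF x1 v x2)
  show ?case
  proof (cases "\<exists>s\<in>S. is_hole s")
    case True
    then obtain s where "s \<in> S" "is_hole s" by blast
    then show ?thesis using TTryF(3-4) by (cases s) (auto simp: tl_l)
  next
    case False
    then show ?thesis using TTryF(3-4) TTryF(1)[of _ "{a. \<exists>b. TTryF a v b \<in> S}"] TTryF(2)[of _ "{b. \<exists>a. TTryF a v b \<in> S}"]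
      by (auto simp: ti) fastforce+
  qed
next
  case (TRef l e)
  show ?case
  proof (cases "\<exists>s\<in>S. is_hole s")
    case True
    then obtain s where "s \<in> S" "is_hole s" by blast
    then show ?thesis using TRef(1-2) by (cases s) (auto simp: tl_l)
  next
    case False
    then show ?thesis using TRef(1-2) ge_greatest(1)[of _ _ "{a. TRef l a \<in> S}"]
      by (auto simp: ti) fastforce+
  qed
next
  case (TAssign e1 l e2)
  show ?case
  proof (cases "\<exists>s\<in>S. is_hole s")
    case True
    then obtain s where "s \<in> S" "is_hole s" by blast
    then show ?thesis using TAssign(1-2) by (cases s) (auto simp: tl_l)
  next
    case False
    then show ?thesis using TAssign(1-2) ge_greatest(1)[of _ _ "{a. \<exists>b. TAssign a l b \<in> S}"] ge_greatest(1)[of _ _ "{b. \<exists>a. TAssign a l b \<in> S}"]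
      by (auto simp: ti) fastforce+
  qed
next
  case (TDeref l e)
  show ?case
  proof (cases "\<exists>s\<in>S. is_hole s")
    case True
    then obtain s where "s \<in> S" "is_hole s" by blast
    then show ?thesis using TDeref(1-2) by (cases s) (auto simp: tl_l)
  next
    case False
    then show ?thesis using TDeref(1-2) ge_greatest(1)[of _ _ "{a. TDeref l a \<in> S}"]
      by (auto simp: ti) fastforce+
  qed
qed auto

lemma gt_lower: "\<forall>t\<in>S. trace_le t T \<Longrightarrow> s \<in> S \<Longrightarrow> trace_le (gt T S) s"
proof (induct T arbitrary: S s)
  case (TReturn e)
  have sh: "trace_le s (TReturn e)" using TReturn(1-2) by blast
  show ?case
  proof (cases "\<exists>s\<in>S. is_hole s")
    case True
    then show ?thesis using pres[OF sh] by (auto intro!: trace_le.hole)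
  next
    case False
    have b1: "\<forall>t\<in>{a. TReturn a \<in> S}. expr_le t e" using TReturn(1) False by fastforce
    from sh show ?thesis using TReturn(2) False by (cases s) (auto simp: ti intro!: ge_lower(1)[OF b1])
  qed
next
  case (TLetF x)
  have sh: "trace_le s (TLetF x)" using TLetF(2-3) by blast
  show ?case
  proof (cases "\<exists>s\<in>S. is_hole s")
    case True
    then show ?thesis using pres[OF sh] by (auto intro!: trace_le.hole)
  next
    case False
    have b1: "\<forall>t\<in>{a. TLetF a \<in> S}. trace_le t x" using TLetF(2) False by fastforce
    from sh show ?thesis using TLetF(3) False by (cases s) (auto simp: ti intro!: TLetF(1)[OF b1])
  qed
next
  case (TLetS x1 v x2)
  have sh: "trace_le s (TLetS x1 v x2)" using TLetS(3-4) by blast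
  show ?case
  proof (cases "\<exists>s\<in>S. is_hole s")
    case True
    then show ?thesis using pres[OF sh] by (auto intro!: trace_le.hole)
  next
    case False
    have b1: "\<forall>t\<in>{a. \<exists>b. TLetS a v b \<in> S}. trace_le t x1" using TLetS(3) False by fastforce
    have b2: "\<forall>t\<in>{b. \<exists>a. TLetS a v b \<in> S}. trace_le t x2" using TLetS(3) False by fastforce
    from sh show ?thesis using TLetS(4) False by (cases s) (auto simp: ti intro!: TLetS(1)[OF b1] TLetS(2)[OF b2])
  qed
next
  case (TApp e1 e2 f v x)
  have sh: "trace_le s (TApp e1 e2 f v x)" using TApp(2-3) by blast
  show ?case
  proof (cases "\<exists>s\<in>S. is_hole s")
    case True
    then show ?thesis using pres[OF sh] by (auto intro!: trace_le.hole)
  next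
    case False
    have b1: "\<forall>t\<in>{a. \<exists>b c. TApp a b f v c \<in> S}. expr_le t e1" using TApp(2) False by fastforce
    have b2: "\<forall>t\<in>{b. \<exists>a c. TApp a b f v c \<in> S}. expr_le t e2" using TApp(2) False by fastforce
    have b3: "\<forall>t\<in>{c. \<exists>a b. TApp a b f v c \<in> S}. trace_le t x" using TApp(2) False by fastforce
    from sh show ?thesis using TApp(3) False by (cases s) (auto simp: ti intro!: ge_lower(1)[OF b1] ge_lower(1)[OF b2] TApp(1)[OF b3])
  qed
next
  case (TCaseL e v x w)
  have sh: "trace_le s (TCaseL e v x w)" using TCaseL(2-3) by blast
  show ?case
  proof (cases "\<exists>s\<in>S. is_hole s")
    case True
    then show ?thesis using pres[OF sh] by (auto intro!: trace_le.hole)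
  next
    case False
    have b1: "\<forall>t\<in>{a. \<exists>b. TCaseL a v b w \<in> S}. expr_le t e" using TCaseL(2) False by fastforce
    have b2: "\<forall>t\<in>{b. \<exists>a. TCaseL a v b w \<in> S}. trace_le t x" using TCaseL(2) False by fastforce
    from sh show ?thesis using TCaseL(3) False by (cases s) (auto simp: ti intro!: ge_lower(1)[OF b1] TCaseL(1)[OF b2])
  qed
next
  case (TCaseR e v w x)
  have sh: "trace_le s (TCaseR e v w x)" using TCaseR(2-3) by blast
  show ?case
  proof (cases "\<exists>s\<in>S. is_hole s")
    case True
    then show ?thesis using pres[OF sh] by (auto intro!: trace_le.hole)
  next
    case False
    have b1: "\<forall>t\<in>{a. \<exists>b. TCaseR a v w b \<in> S}. expr_le t e" using TCaseR(2) False by fastforce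
    have b2: "\<forall>t\<in>{b. \<exists>a. TCaseR a v w b \<in> S}. trace_le t x" using TCaseR(2) False by fastforce
    from sh show ?thesis using TCaseR(3) False by (cases s) (auto simp: ti intro!: ge_lower(1)[OF b1] TCaseR(1)[OF b2])
  qed
next
  case (TRaise e)
  have sh: "trace_le s (TRaise e)" using TRaise(1-2) by blast
  show ?case
  proof (cases "\<exists>s\<in>S. is_hole s")
    case True
    then show ?thesis using pres[OF sh] by (auto intro!: trace_le.hole)
  next
    case False
    have b1: "\<forall>t\<in>{a. TRaise a \<in> S}. expr_le t e" using TRaise(1) False by fastforce
    from sh show ?thesis using TRaise(2) False by (cases s) (auto simp: ti intro!: ge_lower(1)[OF b1])
  qed
next
  case (TTryS x)
  have sh: "trace_le s (TTryS x)" using TTryS(2-3) by blast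
  show ?case
  proof (cases "\<exists>s\<in>S. is_hole s")
    case True
    then show ?thesis using pres[OF sh] by (auto intro!: trace_le.hole)
  next
    case False
    have b1: "\<forall>t\<in>{a. TTryS a \<in> S}. trace_le t x" using TTryS(2) False by fastforce
    from sh show ?thesis using TTryS(3) False by (cases s) (auto simp: ti intro!: TTryS(1)[OF b1])
  qed
next
  case (TTryF x1 v x2)
  have sh: "trace_le s (TTryF x1 v x2)" using TTryF(3-4) by blast
  show ?case
  proof (cases "\<exists>s\<in>S. is_hole s")
    case True
    then show ?thesis using pres[OF sh] by (auto intro!: trace_le.hole)
  next
    case False
    have b1: "\<forall>t\<in>{a. \<exists>b. TTryF a v b \<in> S}. trace_le t x1" using TTryF(3) False by fastforce
    have b2: "\<forall>t\<in>{b. \<exists>a. TTryF a v b \<in> S}. trace_le t x2" using TTryF(3) False by fastforce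
    from sh show ?thesis using TTryF(4) False by (cases s) (auto simp: ti intro!: TTryF(1)[OF b1] TTryF(2)[OF b2])
  qed
next
  case (TRef l e)
  have sh: "trace_le s (TRef l e)" using TRef(1-2) by blast
  show ?case
  proof (cases "\<exists>s\<in>S. is_hole s")
    case True
    then show ?thesis using pres[OF sh] by (auto intro!: trace_le.hole)
  next
    case False
    have b1: "\<forall>t\<in>{a. TRef l a \<in> S}. expr_le t e" using TRef(1) False by fastforce
    from sh show ?thesis using TRef(2) False by (cases s) (auto simp: ti intro!: ge_lower(1)[OF b1])
  qed
next
  case (TAssign e1 l e2)
  have sh: "trace_le s (TAssign e1 l e2)" using TAssign(1-2) by blast
  show ?case
  proof (cases "\<exists>s\<in>S. is_hole s")
    case True
    then show ?thesis using pres[OF sh] by (auto intro!: trace_le.hole)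
  next
    case False
    have b1: "\<forall>t\<in>{a. \<exists>b. TAssign a l b \<in> S}. expr_le t e1" using TAssign(1) False by fastforce
    have b2: "\<forall>t\<in>{b. \<exists>a. TAssign a l b \<in> S}. expr_le t e2" using TAssign(1) False by fastforce
    from sh show ?thesis using TAssign(2) False by (cases s) (auto simp: ti intro!: ge_lower(1)[OF b1] ge_lower(1)[OF b2])
  qed
next
  case (TDeref l e)
  have sh: "trace_le s (TDeref l e)" using TDeref(1-2) by blast
  show ?case
  proof (cases "\<exists>s\<in>S. is_hole s")
    case True
    then show ?thesis using pres[OF sh] by (auto intro!: trace_le.hole)
  next
    case False
    have b1: "\<forall>t\<in>{a. TDeref l a \<in> S}. expr_le t e" using TDeref(1) False by fastforce
    from sh show ?thesis using TDeref(2) False by (cases s) (auto simp: ti intro!: ge_lower(1)[OF b1])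
  qed
qed auto

theorem lemma4p1:
  shows "complete_lattice (prefix_order T)"
proof -
  interpret po: partial_order "prefix_order T"
    by unfold_locales (auto simp: prefix_order_def refl_t intro: trans_t antisym_t)
  show ?thesis
  proof (rule po.complete_lattice_criterion1)
    show "\<exists>g. greatest (prefix_order T) g (carrier (prefix_order T))"
      by (rule exI[of _ T]) (auto simp: greatest_def prefix_order_def Prefix_def refl_t)
  next
    fix A assume A: "A \<subseteq> carrier (prefix_order T)" "A \<noteq> {}"
    have A': "\<forall>t\<in>A. trace_le t T" using A(1) by (auto simp: prefix_order_def Prefix_def)
    show "\<exists>i. greatest (prefix_order T) i (Lower (prefix_order T) A)"
      apply (rule exI[of _ "gt T A"])
      using A A' by (auto simp: greatest_def Lower_def prefix_order_def Prefix_def gt_le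
          intro: gt_lower gt_greatest)
  qed
qed

end
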